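(* Let $\lambda, r, k$ be positive integers. Let $s_k(n,b)$ be the number of $r$-canonical secondary structures with minimum arc-length $\lambda$ on $n$ vertices having exactly $b$ rainbows of length $k$, and let $\mathbf{S}_k(x,u)=\sum_{n,b}s_k(n,b)x^nu^b$. Then $$\mathbf{S}_k(x,u)=\frac{1}{1-\mathbf{F}(x)-(u-1)f(k+1)x^{k+1}},$$ where $f(m)$ is the number of irreducible such structures on $m$ vertices and $\mathbf{F}(x)=\sum_{m\ge1}f(m)x^m$.
   Context: A diagram on $n$ vertices $1,\dots,n$ ($n\ge0$) is a set of arcs $(i,j)$ with $1\le i<j\le n$ such that no two arcs share an endpoint and no two arcs cross (there are no arcs $(i_1,j_1),(i_2,j_2)$ with $i_1<i_2<j_1<j_2$). The length of an arc $(i,j)$ is $j-i$. A stack is a maximal sequence of arcs $(i,j),(i+1,j-1),\dots,(i+s-1,j-s+1)$ of the diagram; $s$ is its length. An $r$-canonical secondary structure with minimum arc-length $\lambda$ is a diagram in which every arc has length at least $\lambda$ and every stack has length at least $r$ (the empty structure on $0$ vertices is counted). A rainbow is an arc $(i,j)$ maximal for the partial order $(i,j)\preceq(i',j')\iff i'\le i<j\le j'$. A structure is irreducible if it is the single vertex with no arcs ($n=1$) or it contains the arc $(1,n)$. *)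

theory Defs
  imports Complex_Main "HOL-Computational_Algebra.Formal_Power_Series"
begin

definition diagram :: "nat \<Rightarrow> (nat \<times> nat) set \<Rightarrow> bool" where
  "diagram n A \<longleftrightarrow>
     A \<subseteq> {(i,j). 1 \<le> i \<and> i < j \<and> j \<le> n} \<and>
     (\<forall>(i,j)\<in>A. \<forall>(i',j')\<in>A. (i,j) \<noteq> (i',j') \<longrightarrow> {i,j} \<inter> {i',j'} = {}) \<and>
     (\<not> (\<exists>(i1,j1)\<in>A. \<exists>(i2,j2)\<in>A. i1 < i2 \<and> i2 < j1 \<and> j1 < j2))"

definition is_stack :: "(nat \<times> nat) set \<Rightarrow> nat \<Rightarrow> nat \<Rightarrow> nat \<Rightarrow> bool" where
  "is_stack A i j s \<longleftrightarrow>
     s \<ge> 1 \<and> (\<forall>t<s. (i + t, j - t) \<in> A) \<and>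
     (i - 1, j + 1) \<notin> A \<and> (i + s, j - s) \<notin> A"

definition sec_struct :: "nat \<Rightarrow> nat \<Rightarrow> nat \<Rightarrow> (nat \<times> nat) set \<Rightarrow> bool" where
  "sec_struct r lam n A \<longleftrightarrow>
     diagram n A \<and>
     (\<forall>(i,j)\<in>A. j - i \<ge> lam) \<and>
     (\<forall>i j s. is_stack A i j s \<longrightarrow> s \<ge> r)"

definition rainbow :: "(nat \<times> nat) set \<Rightarrow> nat \<times> nat \<Rightarrow> bool" where
  "rainbow A a \<longleftrightarrow> a \<in> A \<and>
     (\<forall>(i',j')\<in>A. i' \<le> fst a \<and> snd a \<le> j' \<longrightarrow> (i',j') = a)"

definition irreducible_struct :: "nat \<Rightarrow> (nat \<times> nat) set \<Rightarrow> bool" where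
  "irreducible_struct n A \<longleftrightarrow> (n = 1 \<and> A = {}) \<or> (1, n) \<in> A"

definition s_count :: "nat \<Rightarrow> nat \<Rightarrow> nat \<Rightarrow> nat \<Rightarrow> nat \<Rightarrow> nat" where
  "s_count r lam k n b =
     card {A. sec_struct r lam n A \<and>
              card {a. rainbow A a \<and> snd a - fst a = k} = b}"

definition f_count :: "nat \<Rightarrow> nat \<Rightarrow> nat \<Rightarrow> nat" where
  "f_count r lam m = card {A. sec_struct r lam m A \<and> irreducible_struct m A}"

text \<open>S_k(x,u) = sum_{n,b} s_k(n,b) x^n u^b, for a value u; b ranges over 0..n
  (a structure on n vertices has at most n arcs).\<close>
definition S_gf :: "nat \<Rightarrow> nat \<Rightarrow> nat \<Rightarrow> real \<Rightarrow> real fps" where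
  "S_gf r lam k u = Abs_fps (\<lambda>n. \<Sum>b\<le>n. real (s_count r lam k n b) * u ^ b)"

definition F_gf :: "nat \<Rightarrow> nat \<Rightarrow> real fps" where
  "F_gf r lam = Abs_fps (\<lambda>m. if m \<ge> 1 then real (f_count r lam m) else 0)"

end

theory Submission
  imports Defs
begin

definition lstk :: "nat \<Rightarrow> (nat \<times> nat) set \<Rightarrow> bool" where
  "lstk r A \<longleftrightarrow> (\<forall>i j. (i,j)\<in>A \<longrightarrow> (i-1,j+1)\<notin>A \<longrightarrow> (\<forall>t<r. (i+t,j-t)\<in>A))"

definition dj :: "(nat \<times> nat) set \<Rightarrow> bool" where
  "dj A \<longleftrightarrow> (\<forall>(i,j)\<in>A. \<forall>(i',j')\<in>A. (i,j) \<noteq> (i',j') \<longrightarrow> {i,j} \<inter> {i',j'} = {})"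
definition ncr :: "(nat \<times> nat) set \<Rightarrow> bool" where
  "ncr A \<longleftrightarrow> (\<not> (\<exists>(i1,j1)\<in>A. \<exists>(i2,j2)\<in>A. i1 < i2 \<and> i2 < j1 \<and> j1 < j2))"
definition lenok :: "nat \<Rightarrow> (nat \<times> nat) set \<Rightarrow> bool" where
  "lenok lam A \<longleftrightarrow> (\<forall>(i,j)\<in>A. j - i \<ge> lam)"

definition good :: "nat \<Rightarrow> nat \<Rightarrow> (nat \<times> nat) set \<Rightarrow> bool" where
  good_def0: "good r lam A \<longleftrightarrow> dj A \<and> ncr A \<and> lenok lam A \<and> lstk r A"

lemma good_def:
  "good r lam A \<longleftrightarrow>
     (\<forall>(i,j)\<in>A. \<forall>(i',j')\<in>A. (i,j) \<noteq> (i',j') \<longrightarrow> {i,j} \<inter> {i',j'} = {}) \<and>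
     (\<not> (\<exists>(i1,j1)\<in>A. \<exists>(i2,j2)\<in>A. i1 < i2 \<and> i2 < j1 \<and> j1 < j2)) \<and>
     (\<forall>(i,j)\<in>A. j - i \<ge> lam) \<and> lstk r A"
  unfolding good_def0 dj_def ncr_def lenok_def ..

definition valid :: "nat \<Rightarrow> (nat \<times> nat) set \<Rightarrow> bool" where
  "valid n A \<longleftrightarrow> A \<subseteq> {(i,j). 1 \<le> i \<and> i < j \<and> j \<le> n}"

lemma lstk_iff:
  assumes "\<forall>(i,j)\<in>A. i<j"
  shows "(\<forall>i j s. is_stack A i j s \<longrightarrow> s \<ge> r) \<longleftrightarrow> lstk r A"
proof
  assume H: "\<forall>i j s. is_stack A i j s \<longrightarrow> s \<ge> r"
  show "lstk r A" unfolding lstk_def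
  proof (intro allI impI)
    fix i j t assume ij: "(i,j)\<in>A" and nb: "(i-1,j+1)\<notin>A" and tr: "t<r"
    define s where "s = (LEAST t. (i+t,j-t) \<notin> A)"
    have ex: "(i+j, j-j) \<notin> A" using assms by auto
    have s1: "(i+s,j-s)\<notin>A" unfolding s_def by (rule LeastI[of _ j], fact ex)
    have lt: "\<forall>t'<s. (i+t',j-t')\<in>A" using not_less_Least s_def by blast
    have "s \<ge> 1" using ij s1 by (cases s) auto
    hence "is_stack A i j s" using nb s1 lt unfolding is_stack_def by auto
    hence "s \<ge> r" using H by blast
    thus "(i+t,j-t)\<in>A" using lt tr by auto
  qed
next
  assume L: "lstk r A"
  show "\<forall>i j s. is_stack A i j s \<longrightarrow> s \<ge> r"
  proof (intro allI impI)
    fix i j s assume st: "is_stack A i j s"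
    show "s \<ge> r"
    proof (rule ccontr)
      assume "\<not> r \<le> s"
      then have "s < r" by simp
      from st have "(i,j)\<in>A" "(i-1,j+1)\<notin>A" "(i+s,j-s)\<notin>A" unfolding is_stack_def
        by (auto dest: spec[of _ 0])
      with L \<open>s<r\<close> show False unfolding lstk_def by blast
    qed
  qed
qed

lemma sec_iff: "sec_struct r lam n A \<longleftrightarrow> valid n A \<and> good r lam A"
proof -
  have dia: "diagram n A \<longleftrightarrow> valid n A \<and> dj A \<and> ncr A"
    unfolding diagram_def valid_def dj_def ncr_def ..
  have ss: "sec_struct r lam n A \<longleftrightarrow> diagram n A \<and> lenok lam A \<and> (\<forall>i j s. is_stack A i j s \<longrightarrow> s \<ge> r)"
    unfolding sec_struct_def lenok_def ..
  have ar: "valid n A \<Longrightarrow> \<forall>(i,j)\<in>A. i<j" unfolding valid_def by auto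
  have key: "valid n A \<Longrightarrow> (\<forall>i j s. is_stack A i j s \<longrightarrow> s \<ge> r) \<longleftrightarrow> lstk r A"
    using lstk_iff ar by blast
  show ?thesis unfolding ss dia good_def0 using key by blast
qed

definition sh :: "nat \<Rightarrow> (nat \<times> nat) set \<Rightarrow> (nat \<times> nat) set" where
  "sh d A = (\<lambda>(i,j). (i+d, j+d)) ` A"
definition unsh :: "nat \<Rightarrow> (nat \<times> nat) set \<Rightarrow> (nat \<times> nat) set" where
  "unsh d A = (\<lambda>(i,j). (i-d, j-d)) ` A"

lemma mem_sh: "(x,y) \<in> sh d A \<longleftrightarrow> d \<le> x \<and> d \<le> y \<and> (x-d,y-d) \<in> A"
proof
  assume "(x,y) \<in> sh d A"
  then obtain i j where "(i,j)\<in>A" "x = i+d" "y = j+d" unfolding sh_def by auto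
  then show "d \<le> x \<and> d \<le> y \<and> (x-d,y-d) \<in> A" by simp
next
  assume R: "d \<le> x \<and> d \<le> y \<and> (x-d,y-d) \<in> A"
  then have "(x,y) = (\<lambda>(i,j). (i+d, j+d)) (x-d,y-d)" by simp
  then show "(x,y) \<in> sh d A" unfolding sh_def using R by blast
qed

lemma unsh_sh: "unsh d (sh d A) = A"
proof -
  have "unsh d (sh d A) = (\<lambda>x. x) ` A"
    unfolding unsh_def sh_def image_comp by (rule image_cong) auto
  then show ?thesis by simp
qed

lemma sh_unsh: "\<forall>(i,j)\<in>A. d \<le> i \<and> d \<le> j \<Longrightarrow> sh d (unsh d A) = A"
proof -
  assume h: "\<forall>(i,j)\<in>A. d \<le> i \<and> d \<le> j"
  have "sh d (unsh d A) = (\<lambda>x. x) ` A"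
    unfolding unsh_def sh_def image_comp by (rule image_cong) (use h in auto)
  then show ?thesis by simp
qed

lemma valid_sh: "valid m C \<Longrightarrow> valid (m+d) (sh d C)"
  unfolding valid_def sh_def by auto

lemma bex_img: "(\<exists>x\<in>f`A. P x) = (\<exists>y\<in>A. P (f y))" by blast

lemma good_sh:
  assumes v: "\<forall>(i,j)\<in>C. 1 \<le> i \<and> i < j"
  shows "good r lam (sh d C) \<longleftrightarrow> good r lam C"
proof -
  have e1: "dj (sh d C) \<longleftrightarrow> dj C"
    unfolding dj_def sh_def Ball_image_comp by (auto simp: comp_def case_prod_beta)
  have e2: "ncr (sh d C) \<longleftrightarrow> ncr C"
    unfolding ncr_def sh_def bex_img by (auto simp: case_prod_beta)
  have e3: "lenok lam (sh d C) \<longleftrightarrow> lenok lam C"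
    unfolding lenok_def sh_def by auto
  have a1: "(i+d-1, j+d+1) \<in> sh d C \<longleftrightarrow> (i-1,j+1) \<in> C" if "(i,j)\<in>C" for i j
    using v that by (auto simp: mem_sh)
  have a2: "(i+d+t, j+d-t) \<in> sh d C \<longleftrightarrow> (i+t,j-t) \<in> C" if "(i,j)\<in>C" for i j t
  proof (cases "t \<le> j")
    case True then show ?thesis by (auto simp: mem_sh)
  next
    case False then show ?thesis using v by (auto simp: mem_sh)
  qed
  have e4: "lstk r (sh d C) \<longleftrightarrow> lstk r C"
  proof
    assume H: "lstk r (sh d C)"
    show "lstk r C" unfolding lstk_def
    proof (intro allI impI)
      fix i j t assume ij: "(i,j)\<in>C" and nb: "(i-1,j+1)\<notin>C" and "t<r"
      have "(i+d,j+d) \<in> sh d C" using ij by (simp add: mem_sh)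
      moreover have "(i+d-1,j+d+1) \<notin> sh d C" using a1[OF ij] nb by simp
      ultimately have "(i+d+t,j+d-t) \<in> sh d C" using H \<open>t<r\<close> unfolding lstk_def by blast
      then show "(i+t,j-t)\<in>C" using a2[OF ij] by simp
    qed
  next
    assume H: "lstk r C"
    show "lstk r (sh d C)" unfolding lstk_def
    proof (intro allI impI)
      fix x y t assume xy: "(x,y) \<in> sh d C" and nb: "(x-1,y+1) \<notin> sh d C" and "t<r"
      then obtain i j where ij: "(i,j)\<in>C" "x = i+d" "y = j+d" unfolding sh_def by auto
      have "(i-1,j+1)\<notin>C" using a1[OF ij(1)] nb ij by simp
      then have "(i+t,j-t)\<in>C" using H ij \<open>t<r\<close> unfolding lstk_def by blast
      then show "(x+t,y-t) \<in> sh d C" using a2[OF ij(1), of t] ij by (simp add: ac_simps)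
    qed
  qed
  show ?thesis unfolding good_def0 using e1 e2 e3 e4 by simp
qed

definition Lm :: "nat \<Rightarrow> (nat \<times> nat) set" where "Lm m = {p. snd p \<le> m}"
definition Rm :: "nat \<Rightarrow> (nat \<times> nat) set" where "Rm m = {p. m < fst p}"
definition nos :: "nat \<Rightarrow> (nat \<times> nat) set \<Rightarrow> bool" where
  "nos m A \<longleftrightarrow> (\<forall>(i,j)\<in>A. i \<le> m \<longrightarrow> j \<le> m)"
definition arcs :: "(nat \<times> nat) set \<Rightarrow> bool" where
  "arcs A \<longleftrightarrow> (\<forall>(i,j)\<in>A. 1 \<le> i \<and> i < j)"

lemma valid_arcs: "valid n A \<Longrightarrow> arcs A"
  unfolding valid_def arcs_def by auto

lemma arcsD: "arcs A \<Longrightarrow> (i,j)\<in>A \<Longrightarrow> 1 \<le> i \<and> i < j"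
  unfolding arcs_def by blast
lemma djE: "dj X \<Longrightarrow> (a,b)\<in>X \<Longrightarrow> (c,d)\<in>X \<Longrightarrow> (a,b)\<noteq>(c,d) \<Longrightarrow> {a,b}\<inter>{c,d} = {}"
  unfolding dj_def by fast
lemma djI: "(\<And>a b c d. (a,b)\<in>X \<Longrightarrow> (c,d)\<in>X \<Longrightarrow> (a,b)\<noteq>(c,d) \<Longrightarrow> {a,b}\<inter>{c,d} = {}) \<Longrightarrow> dj X"
  unfolding dj_def by fast
lemma ncrE: "ncr X \<Longrightarrow> (a,b)\<in>X \<Longrightarrow> (c,d)\<in>X \<Longrightarrow> a < c \<Longrightarrow> c < b \<Longrightarrow> b < d \<Longrightarrow> False"
  unfolding ncr_def by fast
lemma ncrI: "(\<And>a b c d. (a,b)\<in>X \<Longrightarrow> (c,d)\<in>X \<Longrightarrow> a < c \<Longrightarrow> c < b \<Longrightarrow> b < d \<Longrightarrow> False) \<Longrightarrow> ncr X"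
  unfolding ncr_def by fast

lemma good_union:
  assumes gB: "good r lam B" and gD: "good r lam D" and BL: "B \<subseteq> Lm m" and DR: "D \<subseteq> Rm m"
    and aB: "arcs B" and aD: "arcs D"
  shows "good r lam (B \<union> D)"
proof -
  have djB: "dj B" and ncB: "ncr B" and lB: "lenok lam B" and sB: "lstk r B" using gB unfolding good_def0 by auto
  have djD: "dj D" and ncD: "ncr D" and lD: "lenok lam D" and sD: "lstk r D" using gD unfolding good_def0 by auto
  have inB: "j \<le> m" "1 \<le> i" "i < j" if "(i,j)\<in>B" for i j using that BL arcsD[OF aB that] unfolding Lm_def by auto
  have inD: "m < i" "i < j" if "(i,j)\<in>D" for i j using that DR arcsD[OF aD that] unfolding Rm_def by auto
  have p1: "dj (B \<union> D)"
  proof (rule djI)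
    fix i j i' j' assume a: "(i,j)\<in>B \<union> D" "(i',j')\<in>B \<union> D" "(i,j) \<noteq> (i',j')"
    show "{i,j} \<inter> {i',j'} = {}"
    proof (cases "(i,j)\<in>B")
      case True
      show ?thesis
      proof (cases "(i',j')\<in>B")
        case True then show ?thesis using djE[OF djB \<open>(i,j)\<in>B\<close> _ a(3)] by blast
      next
        case False then have "(i',j')\<in>D" using a by blast
        then show ?thesis using inB[OF \<open>(i,j)\<in>B\<close>] inD[of i' j'] by auto
      qed
    next
      case False then have d: "(i,j)\<in>D" using a by blast
      show ?thesis
      proof (cases "(i',j')\<in>B")
        case True then show ?thesis using inB[OF True] inD[OF d] by auto
      next
        case False then have "(i',j')\<in>D" using a by blast
        then show ?thesis using djE[OF djD d _ a(3)] by blast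
      qed
    qed
  qed
  have p2: "ncr (B \<union> D)"
  proof (rule ncrI)
    fix i1 j1 i2 j2 assume a: "(i1,j1)\<in>B \<union> D" "(i2,j2)\<in>B \<union> D" "i1 < i2" "i2 < j1" "j1 < j2"
    show False
    proof (cases "(i1,j1)\<in>B")
      case True
      show ?thesis
      proof (cases "(i2,j2)\<in>B")
        case True then show ?thesis using ncrE[OF ncB \<open>(i1,j1)\<in>B\<close> _ a(3-5)] by blast
      next
        case False then have "(i2,j2)\<in>D" using a by blast
        then show ?thesis using inB[OF \<open>(i1,j1)\<in>B\<close>] inD[of i2 j2] a by auto
      qed
    next
      case False then have d: "(i1,j1)\<in>D" using a by blast
      show ?thesis
      proof (cases "(i2,j2)\<in>B")
        case True then show ?thesis using inB[OF True] inD[OF d] a by auto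
      next
        case False then have "(i2,j2)\<in>D" using a by blast
        then show ?thesis using ncrE[OF ncD d _ a(3-5)] by blast
      qed
    qed
  qed
  have p3: "lenok lam (B \<union> D)" using lB lD unfolding lenok_def by blast
  have p4: "lstk r (B \<union> D)" unfolding lstk_def
  proof (intro allI impI)
    fix i j t assume a: "(i,j)\<in>B \<union> D" "(i-1,j+1)\<notin>B \<union> D" "t<r"
    show "(i+t,j-t)\<in>B \<union> D"
    proof (cases "(i,j)\<in>B")
      case True then have "(i+t,j-t)\<in>B" using sB a unfolding lstk_def by blast
      then show ?thesis by simp
    next
      case False then have "(i,j)\<in>D" using a by auto
      then have "(i+t,j-t)\<in>D" using sD a unfolding lstk_def by blast
      then show ?thesis by simp
    qed
  qed
  show ?thesis unfolding good_def0 using p1 p2 p3 p4 by simp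
qed

lemma good_split:
  assumes g: "good r lam A" and a: "arcs A" and n: "nos m A"
  shows "good r lam (A \<inter> Lm m) \<and> good r lam (A \<inter> Rm m)"
proof -
  have djA: "dj A" and ncA: "ncr A" and lA: "lenok lam A" and sA: "lstk r A" using g unfolding good_def0 by auto
  have sub: "good r lam X" if "X \<subseteq> A" "lstk r X" for X
  proof -
    have "dj X" using djA that(1) by (intro djI) (auto dest: djE)
    moreover have "ncr X" using ncA that(1) by (intro ncrI) (auto dest: ncrE)
    moreover have "lenok lam X" using lA that(1) unfolding lenok_def by blast
    ultimately show ?thesis unfolding good_def0 using that(2) by simp
  qed
  have l1: "lstk r (A \<inter> Lm m)" unfolding lstk_def
  proof (intro allI impI)
    fix i j t assume h: "(i,j)\<in>A \<inter> Lm m" "(i-1,j+1)\<notin>A \<inter> Lm m" "t<r"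
    have "(i-1,j+1)\<notin>A"
    proof
      assume c: "(i-1,j+1)\<in>A"
      have "i - 1 \<le> m" using h a unfolding Lm_def arcs_def by auto
      then have "j+1 \<le> m" using n c unfolding nos_def by auto
      then show False using h c unfolding Lm_def by auto
    qed
    then have "(i+t,j-t)\<in>A" using sA h unfolding lstk_def by blast
    then show "(i+t,j-t)\<in>A \<inter> Lm m" using h unfolding Lm_def by auto
  qed
  have l2: "lstk r (A \<inter> Rm m)" unfolding lstk_def
  proof (intro allI impI)
    fix i j t assume h: "(i,j)\<in>A \<inter> Rm m" "(i-1,j+1)\<notin>A \<inter> Rm m" "t<r"
    have "(i-1,j+1)\<notin>A"
    proof
      assume c: "(i-1,j+1)\<in>A"
      have "i - 1 \<le> m" using h c unfolding Rm_def by auto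
      then have "j+1 \<le> m" using n c unfolding nos_def by auto
      then show False using h a unfolding Rm_def arcs_def by auto
    qed
    then have "(i+t,j-t)\<in>A" using sA h unfolding lstk_def by blast
    then show "(i+t,j-t)\<in>A \<inter> Rm m" using h unfolding Rm_def by auto
  qed
  show ?thesis using sub l1 l2 by blast
qed

lemma split_eq: "arcs A \<Longrightarrow> nos m A \<Longrightarrow> A = (A \<inter> Lm m) \<union> (A \<inter> Rm m)"
  unfolding arcs_def nos_def Lm_def Rm_def by force

definition rb :: "nat \<Rightarrow> (nat \<times> nat) set \<Rightarrow> (nat \<times> nat) set" where
  "rb k A = {a. rainbow A a \<and> snd a - fst a = k}"

lemma rb_sub: "rb k A \<subseteq> A" unfolding rb_def rainbow_def by auto

lemma rb_split:
  assumes a: "arcs A" and n: "nos m A"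
  shows "rb k A = rb k (A \<inter> Lm m) \<union> rb k (A \<inter> Rm m)"
proof -
  have "rainbow A x \<longleftrightarrow> rainbow (A \<inter> Lm m) x \<or> rainbow (A \<inter> Rm m) x" for x
  proof
    assume h: "rainbow A x"
    then have "x \<in> A" unfolding rainbow_def by auto
    then have "x \<in> Lm m \<or> x \<in> Rm m" using split_eq[OF a n] by blast
    then show "rainbow (A \<inter> Lm m) x \<or> rainbow (A \<inter> Rm m) x"
      using h \<open>x\<in>A\<close> unfolding rainbow_def by blast
  next
    assume "rainbow (A \<inter> Lm m) x \<or> rainbow (A \<inter> Rm m) x"
    then show "rainbow A x"
    proof
      assume h: "rainbow (A \<inter> Lm m) x"
      obtain p q where x: "x = (p,q)" by fastforce
      have xin: "(p,q) \<in> A" "q \<le> m" "p < q" using h a x unfolding rainbow_def Lm_def arcs_def by auto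
      have "(i',j') = x" if c: "(i',j')\<in>A" "i' \<le> fst x \<and> snd x \<le> j'" for i' j'
      proof -
        have "i' \<le> m" using c xin x by auto
        then have "j' \<le> m" using n c unfolding nos_def by auto
        then show "(i',j') = x" using h c unfolding rainbow_def Lm_def by auto
      qed
      then show ?thesis unfolding rainbow_def using xin x by auto
    next
      assume h: "rainbow (A \<inter> Rm m) x"
      obtain p q where x: "x = (p,q)" by fastforce
      have xin: "(p,q) \<in> A" "m < p" "p < q" using h a x unfolding rainbow_def Rm_def arcs_def by auto
      have "(i',j') = x" if c: "(i',j')\<in>A" "i' \<le> fst x \<and> snd x \<le> j'" for i' j'
      proof -
        have "m < i'"
        proof (rule ccontr)
          assume "\<not> m < i'"
          then have "j' \<le> m" using n c unfolding nos_def by auto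
          then show False using c xin x by auto
        qed
        then show "(i',j') = x" using h c unfolding rainbow_def Rm_def by auto
      qed
      then show ?thesis unfolding rainbow_def using xin x by auto
    qed
  qed
  then show ?thesis unfolding rb_def by blast
qed

lemma card_rb_split:
  assumes f: "finite A" and a: "arcs A" and n: "nos m A"
  shows "card (rb k A) = card (rb k (A \<inter> Lm m)) + card (rb k (A \<inter> Rm m))"
proof -
  have "rb k (A \<inter> Lm m) \<inter> rb k (A \<inter> Rm m) = {}"
    using rb_sub[of k "A \<inter> Lm m"] rb_sub[of k "A \<inter> Rm m"] a unfolding Lm_def Rm_def arcs_def by fastforce
  moreover have "finite (rb k (A \<inter> Lm m))" "finite (rb k (A \<inter> Rm m))"
    using rb_sub f by (meson finite_Int finite_subset)+
  ultimately show ?thesis using rb_split[OF a n] card_Un_disjoint by metis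
qed

lemma rainbow_sh: "rainbow (sh d C) (x+d,y+d) \<longleftrightarrow> rainbow C (x,y)"
  unfolding rainbow_def sh_def by auto

lemma rb_sh: "rb k (sh d C) = sh d (rb k C)"
proof -
  have "a \<in> rb k (sh d C) \<longleftrightarrow> a \<in> sh d (rb k C)" for a
  proof -
    obtain x y where a: "a = (x,y)" by fastforce
    show ?thesis
    proof (cases "d \<le> x \<and> d \<le> y")
      case True
      then have "a = ((x-d)+d, (y-d)+d)" using a by simp
      then show ?thesis using rainbow_sh[of d C "x-d" "y-d"] True a
        unfolding rb_def by (auto simp: mem_sh)
    next
      case False
      then show ?thesis using a rb_sub[of k "sh d C"] unfolding rb_def by (auto simp: mem_sh)
    qed
  qed
  then show ?thesis by blast
qed

lemma card_sh: "card (sh d X) = card X"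
  unfolding sh_def by (rule card_image) (auto simp: inj_on_def)

lemma card_rb_sh: "card (rb k (sh d C)) = card (rb k C)"
  by (simp add: rb_sh card_sh)

definition TT :: "nat \<Rightarrow> nat \<Rightarrow> nat \<Rightarrow> (nat \<times> nat) set set" where
  "TT r lam n = {A. sec_struct r lam n A}"
definition II :: "nat \<Rightarrow> nat \<Rightarrow> nat \<Rightarrow> (nat \<times> nat) set set" where
  "II r lam m = {B. sec_struct r lam m B \<and> irreducible_struct m B}"
definition fb :: "(nat \<times> nat) set \<Rightarrow> nat" where
  "fb A = (if \<exists>j. (1,j)\<in>A then (THE j. (1,j)\<in>A) else 1)"

lemma finite_TT: "finite (TT r lam n)"
proof -
  have "TT r lam n \<subseteq> Pow ({1..n}\<times>{1..n})"
    unfolding TT_def sec_iff valid_def by auto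
  then show ?thesis by (rule finite_subset) auto
qed

lemma finite_II: "finite (II r lam n)"
  using finite_TT[of r lam n] unfolding TT_def II_def by (rule finite_subset[rotated]) auto

lemma finite_sec: "sec_struct r lam n A \<Longrightarrow> finite A"
  unfolding sec_iff valid_def by (rule finite_subset[of _ "{1..n}\<times>{1..n}"]) auto

lemma fb_eq:
  assumes g: "good r lam A" and h: "(1,m)\<in>A"
  shows "fb A = m"
proof -
  have "j = m" if "(1,j)\<in>A" for j
  proof (rule ccontr)
    assume "j \<noteq> m"
    then have "{1,j} \<inter> {1,m} = {}" using djE[of A 1 j 1 m] g h that unfolding good_def0 by auto
    then show False by auto
  qed
  then have "(THE j. (1,j)\<in>A) = m" using h by blast
  then show ?thesis unfolding fb_def using h by auto
qed

lemma fb_eq1: "\<not>(\<exists>j. (1,j)\<in>A) \<Longrightarrow> fb A = 1"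
  unfolding fb_def by auto

lemma II1: "B \<in> II r lam 1 \<Longrightarrow> B = {}"
  unfolding II_def irreducible_struct_def sec_iff valid_def by auto

lemma II2: "B \<in> II r lam m \<Longrightarrow> m \<noteq> 1 \<Longrightarrow> (1,m) \<in> B"
  unfolding II_def irreducible_struct_def by auto

lemma phi_props:
  assumes m: "1 \<le> m" "m \<le> n" and B: "B \<in> II r lam m" and C: "C \<in> TT r lam (n-m)"
  shows "B \<union> sh m C \<in> TT r lam n" "(B \<union> sh m C) \<inter> Lm m = B"
    "(B \<union> sh m C) \<inter> Rm m = sh m C" "nos m (B \<union> sh m C)" "fb (B \<union> sh m C) = m"
proof -
  have vB: "valid m B" and gB: "good r lam B" using B unfolding II_def sec_iff by auto
  have vC: "valid (n-m) C" and gC: "good r lam C" using C unfolding TT_def sec_iff by auto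
  have aC: "arcs C" using vC by (rule valid_arcs)
  have vS: "valid n (sh m C)" using valid_sh[OF vC, of m] m by simp
  have gS: "good r lam (sh m C)" using good_sh[of C r lam m] aC gC unfolding arcs_def by auto
  have BL: "B \<subseteq> Lm m" using vB unfolding valid_def Lm_def by auto
  have SR: "sh m C \<subseteq> Rm m" using aC unfolding arcs_def Rm_def sh_def by auto
  have g: "good r lam (B \<union> sh m C)"
    by (rule good_union[OF gB gS BL SR valid_arcs[OF vB] valid_arcs[OF vS]])
  have v: "valid n (B \<union> sh m C)" using vB vS m unfolding valid_def by auto
  show "B \<union> sh m C \<in> TT r lam n" using g v unfolding TT_def sec_iff by auto
  have Sa: "m < a \<and> a < b" if "(a,b) \<in> sh m C" for a b
    using that arcsD[OF aC, of "a-m" "b-m"] by (auto simp: mem_sh)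
  have Ba: "1 \<le> a \<and> a < b \<and> b \<le> m" if "(a,b) \<in> B" for a b
    using that vB unfolding valid_def by auto
  show "(B \<union> sh m C) \<inter> Lm m = B" unfolding Lm_def using Sa Ba by fastforce
  show "(B \<union> sh m C) \<inter> Rm m = sh m C" unfolding Rm_def using Sa Ba by fastforce
  show "nos m (B \<union> sh m C)" using BL SR unfolding Lm_def Rm_def nos_def by auto
  show "fb (B \<union> sh m C) = m"
  proof (cases "m = 1")
    case True
    then have "B = {}" using II1 B by simp
    moreover have "(1,j) \<notin> sh m C" for j using aC True unfolding arcs_def by (auto simp: mem_sh)
    ultimately show ?thesis using True fb_eq1 by auto
  next
    case False
    then have "(1,m)\<in>B" using II2 B by simp
    then show ?thesis using fb_eq[OF g] by auto
  qed
qed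

lemma psi_props:
  assumes A: "A \<in> TT r lam n" and n: "1 \<le> n"
  defines "m \<equiv> fb A"
  shows "1 \<le> m" "m \<le> n" "nos m A" "A \<inter> Lm m \<in> II r lam m"
    "unsh m (A \<inter> Rm m) \<in> TT r lam (n-m)" "A = (A \<inter> Lm m) \<union> sh m (unsh m (A \<inter> Rm m))"
proof -
  have v: "valid n A" and g: "good r lam A" using A unfolding TT_def sec_iff by auto
  have a: "arcs A" using v by (rule valid_arcs)
  have mn: "1 \<le> m \<and> m \<le> n \<and> nos m A \<and> (m \<noteq> 1 \<longrightarrow> (1,m)\<in>A)"
  proof (cases "\<exists>j. (1,j)\<in>A")
    case True
    then obtain j where j: "(1,j)\<in>A" by blast
    then have mj: "m = j" using fb_eq[OF g j] m_def by simp
    have "1 < j" "j \<le> n" using j v unfolding valid_def by auto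
    moreover have "nos j A" unfolding nos_def
    proof (clarify)
      fix i j' assume ij: "(i,j')\<in>A" "i \<le> j"
      show "j' \<le> j"
      proof (cases "(i,j') = (1,j)")
        case True then show ?thesis by simp
      next
        case False
        then have d: "{i,j'} \<inter> {1,j} = {}" using djE[of A i j' 1 j] g ij j False unfolding good_def0 by auto
        show ?thesis
        proof (rule ccontr)
          assume "\<not> j' \<le> j"
          then have "1 < i" "i < j" "j < j'" using d ij a unfolding arcs_def by auto
          then show False using ncrE[of A 1 j i j'] g ij j unfolding good_def0 by auto
        qed
      qed
    qed
    ultimately show ?thesis using mj j by auto
  next
    case False
    then have m1: "m = 1" using fb_eq1 m_def by simp
    have "nos 1 A" unfolding nos_def
    proof clarify
      fix i j assume "(i,j)\<in>A" "i \<le> 1"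
      then have "i = 1" using a unfolding arcs_def by auto
      then show "j \<le> 1" using False \<open>(i,j)\<in>A\<close> by auto
    qed
    then show ?thesis using m1 n by auto
  qed
  then show "1 \<le> m" "m \<le> n" "nos m A" by auto
  have gs: "good r lam (A \<inter> Lm m)" "good r lam (A \<inter> Rm m)" using good_split[OF g a] mn by auto
  have vL: "valid m (A \<inter> Lm m)" using v unfolding valid_def Lm_def by auto
  have irr: "irreducible_struct m (A \<inter> Lm m)"
  proof (cases "m = 1")
    case True
    then have "A \<inter> Lm m = {}" using a unfolding arcs_def Lm_def by auto
    then show ?thesis using True unfolding irreducible_struct_def by simp
  next
    case False
    then show ?thesis using mn unfolding irreducible_struct_def Lm_def by auto
  qed
  show "A \<inter> Lm m \<in> II r lam m" using vL gs irr unfolding II_def sec_iff by auto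
  define D where "D = A \<inter> Rm m"
  have Dm: "\<forall>(i,j)\<in>D. m \<le> i \<and> m \<le> j" using a unfolding D_def Rm_def arcs_def by auto
  have shD: "sh m (unsh m D) = D" using sh_unsh[OF Dm] .
  have aU: "\<forall>(i,j)\<in>unsh m D. 1 \<le> i \<and> i < j" using a unfolding D_def Rm_def arcs_def unsh_def by auto
  have vU: "valid (n-m) (unsh m D)" using v unfolding D_def Rm_def valid_def unsh_def by auto
  have gU: "good r lam (unsh m D)" using good_sh[OF aU, of r lam m] shD gs(2) D_def by simp
  show "unsh m (A \<inter> Rm m) \<in> TT r lam (n-m)" using vU gU D_def unfolding TT_def sec_iff by auto
  show "A = (A \<inter> Lm m) \<union> sh m (unsh m (A \<inter> Rm m))" using shD D_def split_eq[OF a] mn by auto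
qed

lemma card_rb_II:
  assumes B: "B \<in> II r lam m" and m: "1 \<le> m" and k: "k > 0"
  shows "card (rb k B) = (if m = k+1 then 1 else 0)"
proof (cases "m = 1")
  case True
  then have "B = {}" using II1 B by simp
  then show ?thesis using rb_sub[of k B] True k by auto
next
  case False
  then have h: "(1,m)\<in>B" using II2 B by simp
  have v: "valid m B" using B unfolding II_def sec_iff by auto
  have "rainbow B a \<longleftrightarrow> a = (1,m)" for a
  proof
    assume "rainbow B a"
    moreover have "1 \<le> fst a \<and> snd a \<le> m" if "a \<in> B" using v that unfolding valid_def by auto
    ultimately show "a = (1,m)" using h unfolding rainbow_def by auto
  next
    assume "a = (1,m)"
    then show "rainbow B a" using h v unfolding rainbow_def valid_def by auto
  qed
  then have "rb k B = (if m - 1 = k then {(1,m)} else {})" unfolding rb_def by auto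
  then show ?thesis using m False by auto
qed

definition W :: "nat \<Rightarrow> nat \<Rightarrow> nat \<Rightarrow> real \<Rightarrow> nat \<Rightarrow> real" where
  "W r lam k u n = (\<Sum>A\<in>TT r lam n. u ^ card (rb k A))"

lemma W_rec:
  assumes n: "1 \<le> n" and k: "k > 0"
  shows "W r lam k u n = (\<Sum>m=1..n. (real (card (II r lam m)) * (if m = k+1 then u else 1)) * W r lam k u (n-m))"
proof -
  define SS where "SS = Sigma {1..n} (\<lambda>m. II r lam m \<times> TT r lam (n-m))"
  define \<Phi> where "\<Phi> = (\<lambda>(m::nat,B,C). B \<union> sh m C)"
  define \<Psi> where "\<Psi> = (\<lambda>A. (fb A, A \<inter> Lm (fb A), unsh (fb A) (A \<inter> Rm (fb A))))"
  have bij: "bij_betw \<Phi> SS (TT r lam n)"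
  proof (rule bij_betw_byWitness[where f'=\<Psi>])
    show "\<forall>x\<in>SS. \<Psi> (\<Phi> x) = x"
    proof
      fix x assume "x \<in> SS"
      then obtain m B C where x: "x = (m,B,C)" "1 \<le> m" "m \<le> n" "B \<in> II r lam m" "C \<in> TT r lam (n-m)"
        unfolding SS_def by auto
      show "\<Psi> (\<Phi> x) = x" using phi_props[OF x(2-5)] x(1) unfolding \<Phi>_def \<Psi>_def
        by (simp add: unsh_sh)
    qed
    show "\<forall>A\<in>TT r lam n. \<Phi> (\<Psi> A) = A"
      using psi_props[OF _ n] unfolding \<Phi>_def \<Psi>_def by auto
    show "\<Phi> ` SS \<subseteq> TT r lam n"
      using phi_props(1) unfolding \<Phi>_def SS_def by auto
    show "\<Psi> ` TT r lam n \<subseteq> SS"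
      using psi_props[OF _ n] unfolding \<Psi>_def SS_def by auto
  qed
  have w: "u ^ card (rb k (\<Phi> (m,B,C))) = (if m = k+1 then u else 1) * u ^ card (rb k C)"
    if "(m,B,C) \<in> SS" for m B C
  proof -
    have x: "1 \<le> m" "m \<le> n" "B \<in> II r lam m" "C \<in> TT r lam (n-m)" using that unfolding SS_def by auto
    note p = phi_props[OF x]
    have fin: "finite (B \<union> sh m C)" using p(1) finite_sec unfolding TT_def by blast
    have ar: "arcs (B \<union> sh m C)" using p(1) valid_arcs unfolding TT_def sec_iff by blast
    have "card (rb k (B \<union> sh m C)) = card (rb k B) + card (rb k C)"
      using card_rb_split[OF fin ar p(4), of k] p(2,3) card_rb_sh by simp
    then show ?thesis unfolding \<Phi>_def using card_rb_II[OF x(3) x(1) k] by (simp add: power_add)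
  qed
  have "W r lam k u n = (\<Sum>x\<in>SS. u ^ card (rb k (\<Phi> x)))"
    unfolding W_def by (rule sum.reindex_bij_betw[OF bij, symmetric])
  also have "\<dots> = (\<Sum>(m,y)\<in>SS. u ^ card (rb k (\<Phi> (m,y))))" by simp
  also have "\<dots> = (\<Sum>m\<in>{1..n}. \<Sum>y\<in>II r lam m \<times> TT r lam (n-m). u ^ card (rb k (\<Phi> (m,y))))"
    unfolding SS_def by (rule sum.Sigma[symmetric]) (auto simp: finite_II finite_TT)
  also have "\<dots> = (\<Sum>m\<in>{1..n}. \<Sum>y\<in>II r lam m \<times> TT r lam (n-m). (if m = k+1 then u else 1) * u ^ card (rb k (snd y)))"
    by (intro sum.cong refl) (auto simp: w SS_def)
  also have "\<dots> = (\<Sum>m\<in>{1..n}. (real (card (II r lam m)) * (if m = k+1 then u else 1)) * W r lam k u (n-m))"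
  proof (intro sum.cong refl)
    fix m assume "m \<in> {1..n}"
    define c where "c = (if m = k+1 then u else 1)"
    have "(\<Sum>y\<in>II r lam m \<times> TT r lam (n-m). c * u ^ card (rb k (snd y)))
      = (\<Sum>(B,C)\<in>II r lam m \<times> TT r lam (n-m). c * u ^ card (rb k C))"
      by (simp add: case_prod_beta)
    also have "\<dots> = (\<Sum>B\<in>II r lam m. \<Sum>C\<in>TT r lam (n-m). c * u ^ card (rb k C))"
      by (rule sum.cartesian_product[symmetric])
    finally have "(\<Sum>y\<in>II r lam m \<times> TT r lam (n-m). (if m = k+1 then u else 1) * u ^ card (rb k (snd y)))
      = (\<Sum>B\<in>II r lam m. \<Sum>C\<in>TT r lam (n-m). (if m = k+1 then u else 1) * u ^ card (rb k C))"
      unfolding c_def .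
    also have "\<dots> = (\<Sum>B\<in>II r lam m. (if m = k+1 then u else 1) * W r lam k u (n-m))"
      unfolding W_def by (simp add: sum_distrib_left)
    also have "\<dots> = (real (card (II r lam m)) * (if m = k+1 then u else 1)) * W r lam k u (n-m)"
      by simp
    finally show "(\<Sum>y\<in>II r lam m \<times> TT r lam (n-m). (if m = k+1 then u else 1) * u ^ card (rb k (snd y)))
      = (real (card (II r lam m)) * (if m = k+1 then u else 1)) * W r lam k u (n-m)" .
  qed
  finally show ?thesis by simp
qed

lemma W0: "W r lam k u 0 = 1"
proof -
  have v: "valid 0 A \<longleftrightarrow> A = {}" for A unfolding valid_def by auto
  have g: "good r lam {}" unfolding good_def0 dj_def ncr_def lenok_def lstk_def by auto
  have "TT r lam 0 = {{}}" unfolding TT_def sec_iff v using g by auto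
  then show ?thesis unfolding W_def rb_def rainbow_def by simp
qed

lemma card_rb_le: "sec_struct r lam n A \<Longrightarrow> card (rb k A) \<le> n"
proof -
  assume s: "sec_struct r lam n A"
  have v: "valid n A" and g: "good r lam A" using s unfolding sec_iff by auto
  have "inj_on fst A"
  proof (rule inj_onI)
    fix x y assume "x\<in>A" "y\<in>A" "fst x = fst y"
    then show "x = y" using djE[of A "fst x" "snd x" "fst y" "snd y"] g unfolding good_def0
      by (metis Int_insert_left_if1 insertI1 insert_not_empty prod.collapse)
  qed
  then have "inj_on fst (rb k A)" using rb_sub inj_on_subset by blast
  moreover have "fst ` rb k A \<subseteq> {1..n}" using rb_sub[of k A] v unfolding valid_def by auto
  ultimately show ?thesis using card_inj_on_le[of fst "rb k A" "{1..n}"] by simp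
qed

lemma S_nth: "fps_nth (S_gf r lam k u) n = W r lam k u n"
proof -
  let ?c = "\<lambda>A. card (rb k A)"
  have "W r lam k u n = (\<Sum>b\<in>{..n}. \<Sum>A\<in>{A\<in>TT r lam n. ?c A = b}. u ^ ?c A)"
    unfolding W_def
    by (rule sum.group[symmetric]) (auto simp: finite_TT[unfolded TT_def] TT_def card_rb_le)
  also have "\<dots> = (\<Sum>b\<le>n. real (s_count r lam k n b) * u ^ b)"
  proof (intro sum.cong refl)
    fix b
    have eqs: "{A. sec_struct r lam n A \<and> card {a. rainbow A a \<and> snd a - fst a = k} = b} = {A\<in>TT r lam n. ?c A = b}"
      unfolding TT_def rb_def by auto
    have "(\<Sum>A\<in>{A\<in>TT r lam n. ?c A = b}. u ^ ?c A) = (\<Sum>A\<in>{A\<in>TT r lam n. ?c A = b}. u ^ b)"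
      by (rule sum.cong) auto
    also have "\<dots> = real (card {A\<in>TT r lam n. ?c A = b}) * u ^ b" by simp
    finally show "(\<Sum>A\<in>{A\<in>TT r lam n. ?c A = b}. u ^ ?c A) = real (s_count r lam k n b) * u ^ b"
      unfolding s_count_def eqs .
  qed
  finally show ?thesis unfolding S_gf_def by simp
qed

lemma Q_nth:
  "fps_nth (1 - F_gf r lam - fps_const ((u - 1) * real (f_count r lam (k + 1))) * fps_X ^ (k + 1)) i =
   (if i = 0 then 1 else - (real (card (II r lam i)) * (if i = k+1 then u else 1)))"
  by (auto simp: F_gf_def f_count_def II_def algebra_simps)

theorem lemma2:
  fixes lam r k :: nat and u :: real
  assumes "lam > 0" and "r > 0" and "k > 0"
  shows "S_gf r lam k u =
    1 / (1 - F_gf r lam - fps_const ((u - 1) * real (f_count r lam (k + 1))) * fps_X ^ (k + 1))"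
proof -
  define Q where "Q = 1 - F_gf r lam - fps_const ((u - 1) * real (f_count r lam (k + 1))) * fps_X ^ (k + 1)"
  define g where "g = (\<lambda>i. real (card (II r lam i)) * (if i = k+1 then u else 1))"
  have Qn: "fps_nth Q i = (if i = 0 then 1 else - g i)" for i
    unfolding Q_def g_def by (rule Q_nth)
  have "Q * S_gf r lam k u = 1"
  proof (rule fps_ext)
    fix n
    have "fps_nth (Q * S_gf r lam k u) n = (\<Sum>i=0..n. fps_nth Q i * W r lam k u (n - i))"
      by (simp add: fps_mult_nth S_nth)
    also have "\<dots> = W r lam k u n - (\<Sum>i=1..n. g i * W r lam k u (n - i))"
    proof -
      have "(\<Sum>i=0..n. fps_nth Q i * W r lam k u (n - i)) =
            fps_nth Q 0 * W r lam k u (n - 0) + (\<Sum>i=Suc 0..n. fps_nth Q i * W r lam k u (n - i))"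
        by (rule sum.atLeast_Suc_atMost) simp
      also have "(\<Sum>i=Suc 0..n. fps_nth Q i * W r lam k u (n - i)) = (\<Sum>i=1..n. - (g i * W r lam k u (n - i)))"
        by (rule sum.cong) (auto simp: Qn)
      finally show ?thesis by (simp add: Qn sum_negf)
    qed
    also have "\<dots> = fps_nth 1 n"
    proof (cases "n = 0")
      case True then show ?thesis by (simp add: W0)
    next
      case False
      then have "W r lam k u n = (\<Sum>i=1..n. g i * W r lam k u (n - i))"
        unfolding g_def using W_rec[of n k r lam u] assms(3) by simp
      then show ?thesis using False by simp
    qed
    finally show "fps_nth (Q * S_gf r lam k u) n = fps_nth 1 n" .
  qed
  then have inv: "inverse Q = S_gf r lam k u" by (rule fps_inverse_unique)
  have "fps_nth Q 0 \<noteq> 0" using Qn by simp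
  then have "1 / Q = inverse Q" by (simp add: fps_divide_unit)
  then show ?thesis using inv Q_def by simp
qed

end
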